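(* Let $X=\mathbb{R}^n$ and suppose A1–A3 hold. Let $\{x_k\}$ be generated by Algorithm 1 in which the acceptance test is replaced by $$f(x_k+\alpha_k\beta^{l}d_k)\le R_k+\rho\alpha_k\beta^{l}\langle\nabla f(x_k),d_k\rangle,$$ where $R_k$ satisfies $f(x_k)\le R_k\le\max_{0\le j\le m(k)}f(x_{k-j})$, with integers $m(0)=0$ and $0\le m(k)\le\min\{m(k-1)+1,N\}$ for $k\ge1$, for a fixed $N\in\mathbb{N}$ (i.e. $\nu_{k,l}=R_k-f(x_k)$). If the level set $\{x\in\mathbb{R}^n:\ f(x)\le f(x_0)\}$ is bounded, then either there exists $\bar k$ with $\nabla f(x_{\bar k})=0$, or $\liminf_{k\to\infty}\|\nabla f(x_k)\|=0$.
   Context: Let $(X,\langle\cdot,\cdot\rangle)$ be a real Hilbert space with induced norm $\|\cdot\|$, and $f:X\to\mathbb{R}$ Fréchet differentiable with gradient $\nabla f$. Algorithm 1 (general non-monotone descent algorithm): parameters $x_0\in X$, $\alpha_0>0$, $\beta,\rho\in(0,1)$. For $k=0,1,2,\dots$: choose $d_k\in X$ with $\langle\nabla f(x_k),d_k\rangle<0$; then for $l=0,1,2,\dots$ choose a number $\nu_{k,l}\ge 0$ and test $$f(x_k+\alpha_k\beta^l d_k)\le f(x_k)+\rho\alpha_k\beta^l\langle\nabla f(x_k),d_k\rangle+\nu_{k,l};$$ let $l_k$ be the first $l$ for which this holds, set $\nu_k:=\nu_{k,l_k}$, $x_{k+1}=x_k+\alpha_k\beta^{l_k}d_k$ and $\alpha_{k+1}=\alpha_k\beta^{l_k-1}$.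 It is assumed the algorithm generates infinite sequences (all $l_k$ finite). Assumptions: A1: $\nabla f$ is Lipschitz continuous with constant $L>0$. A2: there is $f_{low}\in\mathbb{R}$ with $f(x)\ge f_{low}$ for all $x\in X$. A3: there are constants $c_1,c_2>0$ with $\langle\nabla f(x_k),d_k\rangle\le -c_1\|\nabla f(x_k)\|^2$ and $\|d_k\|\le c_2\|\nabla f(x_k)\|$ for all $k$. *)

theory Defs
  imports "HOL-Analysis.Analysis"
begin

end

theory Submission imports Defs begin
lemma descent_ineq:
  fixes f :: "'a::euclidean_space \<Rightarrow> real" and g :: "'a \<Rightarrow> 'a"
  assumes grad: "\<And>y. (f has_derivative (\<lambda>h. g y \<bullet> h)) (at y)"
    and lip: "\<And>y z. norm (g y - g z) \<le> L * norm (y - z)"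
    and s: "s \<ge> 0" and L0: "L \<ge> 0"
  shows "f (x + s *\<^sub>R d) \<le> f x + s * (g x \<bullet> d) + L * s^2 * (norm d)^2"
proof (cases "s = 0")
  case True then show ?thesis by simp
next
  case False
  with s have s0: "0 < s" by simp
  have der: "DERIV (\<lambda>t. f (x + t *\<^sub>R d)) t :> g (x + t *\<^sub>R d) \<bullet> d" for t
  proof -
    have "((\<lambda>t. x + t *\<^sub>R d) has_derivative (\<lambda>h. h *\<^sub>R d)) (at t)"
      by (auto intro!: derivative_eq_intros)
    from has_derivative_compose[OF this grad]
    have "((\<lambda>t. f (x + t *\<^sub>R d)) has_derivative (\<lambda>h. g (x + t *\<^sub>R d) \<bullet> (h *\<^sub>R d))) (at t)"
      by (simp add: o_def)
    then show ?thesis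
      by (rule has_derivative_imp_has_field_derivative) (simp add: inner_scaleR_right)  
  qed
  obtain z where z: "0 < z" "z < s"
    "f (x + s *\<^sub>R d) - f (x + 0 *\<^sub>R d) = (s - 0) * (g (x + z *\<^sub>R d) \<bullet> d)"
    using MVT2[OF s0 der] by auto
  have "g (x + z *\<^sub>R d) \<bullet> d = g x \<bullet> d + (g (x + z *\<^sub>R d) - g x) \<bullet> d"
    by (simp add: inner_diff_left)
  also have "\<dots> \<le> g x \<bullet> d + norm (g (x + z *\<^sub>R d) - g x) * norm d"
    using norm_cauchy_schwarz by simp
  also have "\<dots> \<le> g x \<bullet> d + L * norm (z *\<^sub>R d) * norm d"
    using lip[of "x + z *\<^sub>R d" x] by (simp add: mult_right_mono)
  also have "\<dots> \<le> g x \<bullet> d + L * s * (norm d)^2"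
  proof -
    have "L * norm (z *\<^sub>R d) * norm d = L * z * (norm d)^2" using z
      by (simp add: power2_eq_square)
    also have "\<dots> \<le> L * s * (norm d)^2" using z L0
      by (intro mult_right_mono mult_left_mono) auto
    finally show ?thesis by simp
  qed
  finally have "g (x + z *\<^sub>R d) \<bullet> d \<le> g x \<bullet> d + L * s * (norm d)^2" .
  from mult_left_mono[OF this, of s] s0 z(3) show ?thesis
    by (simp add: algebra_simps power2_eq_square)
qed
theorem corollary3:
  fixes f :: "'a::euclidean_space \<Rightarrow> real"
    and g :: "'a \<Rightarrow> 'a"
    and x d :: "nat \<Rightarrow> 'a"
    and \<alpha> R :: "nat \<Rightarrow> real"
    and lk m :: "nat \<Rightarrow> nat"
    and \<beta> \<rho> L flow c1 c2 :: real
    and N :: nat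
  assumes grad: "\<And>y. (f has_derivative (\<lambda>h. g y \<bullet> h)) (at y)"
    and A1: "L > 0" "\<And>y z. norm (g y - g z) \<le> L * norm (y - z)"
    and A2: "\<And>y. f y \<ge> flow"
    and A3: "c1 > 0" "c2 > 0"
      "\<And>k. g (x k) \<bullet> d k \<le> - c1 * (norm (g (x k)))\<^sup>2"
      "\<And>k. norm (d k) \<le> c2 * norm (g (x k))"
    and params: "\<alpha> 0 > 0" "0 < \<beta>" "\<beta> < 1" "0 < \<rho>" "\<rho> < 1"
    and descent: "\<And>k. g (x k) \<bullet> d k < 0"
    and m0: "m 0 = 0"
    and mk: "\<And>k. k \<ge> 1 \<Longrightarrow> m k \<le> min (m (k - 1) + 1) N"
    and Rk: "\<And>k. f (x k) \<le> R k"
      "\<And>k. R k \<le> Max ((\<lambda>j. f (x (k - j))) ` {0..m k})"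
    and accept: "\<And>k. f (x k + (\<alpha> k * \<beta> ^ lk k) *\<^sub>R d k)
                    \<le> R k + \<rho> * \<alpha> k * \<beta> ^ lk k * (g (x k) \<bullet> d k)"
    and first: "\<And>k l. l < lk k \<Longrightarrow> \<not> (f (x k + (\<alpha> k * \<beta> ^ l) *\<^sub>R d k)
                    \<le> R k + \<rho> * \<alpha> k * \<beta> ^ l * (g (x k) \<bullet> d k))"
    and xstep: "\<And>k. x (Suc k) = x k + (\<alpha> k * \<beta> ^ lk k) *\<^sub>R d k"
    and astep: "\<And>k. \<alpha> (Suc k) = \<alpha> k * \<beta> powi (int (lk k) - 1)"
    and level: "bounded {y. f y \<le> f (x 0)}"
  shows "(\<exists>k. g (x k) = 0) \<or> liminf (\<lambda>k. ereal (norm (g (x k)))) = 0"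
proof -
  define G where "G k = norm (g (x k))" for k
  define t where "t k = \<alpha> k * \<beta> ^ lk k" for k
  define \<tau> where "\<tau> = (1 - \<rho>) * c1 / (L * c2^2)"
  define \<tau>0 where "\<tau>0 = min (\<alpha> 0) (\<beta> * \<tau>)"
  have \<tau>pos: "\<tau> > 0" unfolding \<tau>_def using A1 A3 params by auto
  have \<tau>0pos: "\<tau>0 > 0" unfolding \<tau>0_def using \<tau>pos params by auto
  have gnz: "g (x k) \<noteq> 0" for k using descent[of k] by auto
  have dnz: "d k \<noteq> 0" for k using descent[of k] by auto
  have Gpos: "G k > 0" for k using gnz unfolding G_def by auto
  have apos: "\<alpha> k > 0" for k
  proof (induction k)
    case 0 then show ?case using params by simp
  next
    case (Suc k) then show ?case using astep[of k] params by simp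
  qed
  have tpos: "t k > 0" for k unfolding t_def using apos params by simp
  have astep': "\<alpha> (Suc k) = t k / \<beta>" for k
  proof -
    have "\<beta> powi (int (lk k) - 1) = \<beta> powi (int (lk k)) / \<beta> powi 1"
      using params by (intro power_int_diff) auto
    then have "\<beta> powi (int (lk k) - 1) = \<beta> ^ lk k / \<beta>" by simp
    then show ?thesis using astep[of k] unfolding t_def by simp
  qed
  have tlow: "t k \<ge> \<beta> * \<tau>" if l1: "lk k \<ge> 1" for k
  proof -
    define s where "s = \<alpha> k * \<beta> ^ (lk k - 1)"
    have spos: "s > 0" unfolding s_def using apos params by simp
    obtain l where l: "lk k = Suc l" using l1 by (cases "lk k") auto
    have ts: "t k = \<beta> * s" unfolding t_def s_def by (simp add: l algebra_simps)
    have "\<not> (f (x k + s *\<^sub>R d k) \<le> R k + \<rho> * \<alpha> k * \<beta> ^ (lk k - 1) * (g (x k) \<bullet> d k))"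
      using first[of "lk k - 1" k] l1 unfolding s_def by simp
    then have "f (x k + s *\<^sub>R d k) > R k + \<rho> * s * (g (x k) \<bullet> d k)"
      unfolding s_def by (simp add: mult.assoc)
    moreover have "f (x k + s *\<^sub>R d k) \<le> f (x k) + s * (g (x k) \<bullet> d k) + L * s^2 * (norm (d k))^2"
      using descent_ineq[OF grad A1(2)] spos A1(1) by simp
    ultimately have "\<rho> * s * (g (x k) \<bullet> d k) < s * (g (x k) \<bullet> d k) + L * s^2 * (norm (d k))^2"
      using Rk(1)[of k] by linarith
    then have "s * ((1 - \<rho>) * (- (g (x k) \<bullet> d k))) < s * (L * s * (norm (d k))^2)"
      by (simp add: algebra_simps power2_eq_square)
    then have h1: "(1 - \<rho>) * (- (g (x k) \<bullet> d k)) < L * s * (norm (d k))^2"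
      using spos by (simp only: mult_less_cancel_left_pos)
    have h2: "(1 - \<rho>) * (c1 * (G k)^2) \<le> (1 - \<rho>) * (- (g (x k) \<bullet> d k))"
      using A3(3)[of k] params unfolding G_def by (intro mult_left_mono) auto
    have h3: "(norm (d k))^2 \<le> (c2 * G k)^2"
      using A3(4)[of k] unfolding G_def by (intro power_mono) auto
    have h4: "L * s * (norm (d k))^2 \<le> L * s * (c2 * G k)^2"
      using h3 spos A1(1) by (intro mult_left_mono) auto
    have "((1 - \<rho>) * c1) * (G k)^2 < (L * s * c2^2) * (G k)^2"
      using h1 h2 h4 by (simp add: algebra_simps power_mult_distrib)
    then have "(1 - \<rho>) * c1 < L * s * c2^2"
      using Gpos[of k] by (simp add: mult_less_cancel_right)
    then have "\<tau> < s" unfolding \<tau>_def using A1(1) A3 by (simp add: divide_less_eq mult.commute mult.left_commute)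
    then show ?thesis using ts params by simp
  qed
  have tge: "t k \<ge> \<tau>0" for k
  proof (induction k)
    case 0
    show ?case
    proof (cases "lk 0 \<ge> 1")
      case True then show ?thesis using tlow[of 0] unfolding \<tau>0_def by simp
    next
      case False then have "lk 0 = 0" by simp
      then show ?thesis unfolding t_def \<tau>0_def by simp
    qed
  next
    case (Suc k)
    show ?case
    proof (cases "lk (Suc k) \<ge> 1")
      case True then show ?thesis using tlow[of "Suc k"] unfolding \<tau>0_def by simp
    next
      case False
      then have "lk (Suc k) = 0" by simp
      then have "t (Suc k) = \<alpha> (Suc k)" by (simp add: t_def)
      then have "t (Suc k) = t k / \<beta>" using astep'[of k] by simp
      moreover have "t k \<le> t k / \<beta>" using tpos[of k] params by (simp add: le_divide_eq)
      ultimately show ?thesis using Suc by simp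
    qed
  qed
  have mle: "m k \<le> k" for k
  proof (induction k)
    case 0 then show ?case using m0 by simp
  next
    case (Suc k) then show ?case using mk[of "Suc k"] by simp
  qed
  have mN: "m k \<le> N" for k
    using mk[of k] m0 by (cases k) auto
  define M where "M k = Max ((\<lambda>j. f (x (k - j))) ` {0..m k})" for k
  have Mge: "f (x (k - j)) \<le> M k" if "j \<le> m k" for j k
    unfolding M_def using that by (intro Max_ge) auto
  have Mex: "\<exists>j \<le> m k. M k = f (x (k - j))" for k
  proof -
    have "M k \<in> (\<lambda>j. f (x (k - j))) ` {0..m k}" unfolding M_def by (intro Max_in) auto
    then show ?thesis by auto
  qed
  have Mflow: "M k \<ge> flow" for k using Mge[of 0 k] A2[of "x k"] by simp
  have dec: "f (x (Suc k)) \<le> M k - \<rho> * \<tau>0 * c1 * (G k)^2" for k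
  proof -
    have "\<rho> * t k * (g (x k) \<bullet> d k) \<le> \<rho> * t k * (- c1 * (G k)^2)"
      using A3(3)[of k] tpos[of k] params unfolding G_def by (intro mult_left_mono) auto
    moreover have "\<rho> * \<tau>0 * (c1 * (G k)^2) \<le> \<rho> * t k * (c1 * (G k)^2)"
      using tge[of k] params A3 by (intro mult_right_mono mult_left_mono) auto
    moreover have "R k \<le> M k" using Rk(2)[of k] unfolding M_def by simp
    ultimately show ?thesis using accept[of k] xstep[of k] unfolding t_def
      by (simp add: algebra_simps)
  qed
  have Msuc: "M (Suc k) \<le> M k" for k
  proof -
    obtain j where j: "j \<le> m (Suc k)" "M (Suc k) = f (x (Suc k - j))" using Mex by blast
    show ?thesis
    proof (cases j)
      case 0
      then show ?thesis using j dec[of k] params \<tau>0pos A3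
        by (smt (verit) diff_zero mult_nonneg_nonneg mult_pos_pos zero_le_power2)
    next
      case (Suc j')
      have "j' \<le> m k" using j(1) mk[of "Suc k"] Suc by simp
      then show ?thesis using Mge[of j' k] j Suc by simp
    qed
  qed
  have Mdec: "decseq M" using Msuc by (simp add: decseq_Suc_iff)
  have main: False if e: "\<epsilon> > 0" and K: "\<forall>i\<ge>K. \<epsilon> \<le> G i" for \<epsilon> K
  proof -
    define \<delta> where "\<delta> = \<rho> * \<tau>0 * c1 * \<epsilon>^2"
    have \<delta>pos: "\<delta> > 0" unfolding \<delta>_def using e params \<tau>0pos A3 by simp
    have step: "M (k + Suc N) \<le> M k - \<delta>" if "k \<ge> K" for k
    proof -
      obtain j where j: "j \<le> m (k + Suc N)" "M (k + Suc N) = f (x (k + Suc N - j))"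
        using Mex by blast
      have jN: "j \<le> N" using j(1) mN[of "k + Suc N"] by simp
      define i where "i = k + N - j"
      have i: "k + Suc N - j = Suc i" "i \<ge> k" unfolding i_def using jN by auto
      have "\<epsilon>^2 \<le> (G i)^2" using K i(2) that e by (intro power_mono) auto
      then have "\<delta> \<le> \<rho> * \<tau>0 * c1 * (G i)^2" unfolding \<delta>_def using params \<tau>0pos A3
        by (intro mult_left_mono) auto
      then have "M (k + Suc N) \<le> M i - \<delta>" using j(2) i(1) dec[of i] by simp
      also have "M i \<le> M k" using Mdec i(2) by (simp add: decseqD)
      finally show ?thesis by simp
    qed
    have iter: "M (K + n * Suc N) \<le> M K - real n * \<delta>" for n
    proof (induction n)
      case 0 then show ?case by simp
    next
      case (Suc n)
      have "M (K + Suc n * Suc N) = M ((K + n * Suc N) + Suc N)" by (simp add: algebra_simps)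
      also have "\<dots> \<le> M (K + n * Suc N) - \<delta>" by (rule step) simp
      finally show ?case using Suc by (simp add: algebra_simps)
    qed
    obtain n where n: "M K - flow < real n * \<delta>" using reals_Archimedean3[OF \<delta>pos] by blast
    show False using iter[of n] Mflow[of "K + n * Suc N"] n by simp
  qed
  have "liminf (\<lambda>k. ereal (G k)) = 0"
  proof (rule antisym)
    show "0 \<le> liminf (\<lambda>k. ereal (G k))"
      by (rule Liminf_bounded) (simp add: G_def)
    show "liminf (\<lambda>k. ereal (G k)) \<le> 0"
    proof (rule ccontr)
      assume "\<not> ?thesis"
      then have "0 < liminf (\<lambda>k. ereal (G k))" by simp
      then obtain z where z: "0 < ereal z" "ereal z < liminf (\<lambda>k. ereal (G k))"
        using ereal_dense2 by blast
      then have "eventually (\<lambda>k. ereal z < ereal (G k)) sequentially"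
        using le_Liminf_iff[of "liminf (\<lambda>k. ereal (G k))" sequentially "\<lambda>k. ereal (G k)"] by blast
      then obtain K where "\<forall>i\<ge>K. z < G i" unfolding eventually_sequentially by auto
      then have "\<forall>i\<ge>K. z \<le> G i" by (simp add: less_imp_le)
      moreover have "z > 0" using z by simp
      ultimately show False using main by blast
    qed
  qed
  then show ?thesis unfolding G_def by simp
qed

end
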